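(* Fix a constant $c>0$. Then \[ \lim_{\ell\to\infty}2^{-\ell}\sum_{j=1}^{\ell}\binom{\ell}{j}\frac{1}{1-\left(1-\frac{2c}{\ell}\right)^j}=\frac{1}{1-e^{-c}}. \]
   Context: The sum is over integers $j$; the limit is over integers $\ell\to\infty$ (for $\ell>c$ all denominators are nonzero). In view of the preceding hitting-time formula, $2^\ell$ times this quantity is the expected time for the bitwise-mutation random walk with rate $c/\ell$ (equivalently, the (1+1) EA with mutation rate $c/\ell$ on the Needle function of length $\ell$) started uniformly to hit the all-ones string. *)

theory Defs
  imports "HOL-Analysis.Analysis"
begin

end

theory Submission
  imports Defs "HOL-Real_Asymp.Real_Asymp"
begin
lemma sum_lin: "(\<Sum>i\<le>n. real i * real (n choose i)) = real n * 2^n / 2"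
proof -
  have "(\<Sum>i\<le>n. real i * real (n choose i)) = real (\<Sum>i\<le>n. i * (n choose i))" by simp
  also have "\<dots> = real (n * 2 ^ (n - 1))" by (simp only: choose_linear_sum)
  also have "\<dots> = real n * 2^n / 2" by (cases n) (auto simp: algebra_simps)
  finally show ?thesis .
qed

lemma sum_row: "(\<Sum>i\<le>n. real (n choose i)) = 2^n"
proof -
  have "(\<Sum>i\<le>n. real (n choose i)) = real (\<Sum>i\<le>n. (n choose i))" by simp
  also have "\<dots> = 2^n" by (simp only: choose_row_sum) simp
  finally show ?thesis .
qed

lemma sum_sq: "(\<Sum>i\<le>n. (real i)^2 * real (n choose i)) = real n * (real n + 1) * 2^n / 4"
proof (cases n)
  case 0 then show ?thesis by simp
next
  case (Suc m)
  have "(\<Sum>i\<le>Suc m. (real i)^2 * real (Suc m choose i))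
       = (\<Sum>k\<le>m. (real (Suc k))^2 * real (Suc m choose Suc k))"
    by (subst sum.atMost_Suc_shift) (simp del: binomial_Suc_Suc of_nat_Suc)
  also have "\<dots> = (\<Sum>k\<le>m. real (Suc m) * (real k * real (m choose k) + real (m choose k)))"
  proof (rule sum.cong[OF refl])
    fix k
    have "real (Suc k * (Suc m choose Suc k)) = real (Suc m * (m choose k))"
      by (simp only: Suc_times_binomial)
    hence e: "real (Suc k) * real (Suc m choose Suc k) = real (Suc m) * real (m choose k)"
      by (simp only: of_nat_mult)
    have "(real (Suc k))^2 * real (Suc m choose Suc k) = real (Suc k) * (real (Suc k) * real (Suc m choose Suc k))"
      by (simp add: power2_eq_square)
    also have "\<dots> = real (Suc m) * (real k * real (m choose k) + real (m choose k))"
      by (simp only: e) (simp add: algebra_simps del: binomial_Suc_Suc)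
    finally show "(real (Suc k))^2 * real (Suc m choose Suc k) = real (Suc m) * (real k * real (m choose k) + real (m choose k))" .
  qed
  also have "\<dots> = real (Suc m) * ((\<Sum>k\<le>m. real k * real (m choose k)) + (\<Sum>k\<le>m. real (m choose k)))"
    by (simp only: sum_distrib_left[symmetric] sum.distrib)
  also have "\<dots> = real (Suc m) * (real m * 2^m/2 + 2^m)" by (simp only: sum_lin sum_row)
  also have "\<dots> = real (Suc m) * (real (Suc m) + 1) * 2^(Suc m) / 4" by (simp add: power_Suc algebra_simps add_divide_distrib)
  finally show ?thesis using Suc by simp
qed

lemma sum_var: "(\<Sum>i\<le>n. real (n choose i) * (real i - real n / 2)^2) = real n * 2^n / 4"
proof -
  have "(\<Sum>i\<le>n. real (n choose i) * (real i - real n / 2)^2)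
     = (\<Sum>i\<le>n. (real i)^2 * real (n choose i) - real n * (real i * real (n choose i))
        + (real n)^2/4 * real (n choose i))"
    by (rule sum.cong) (auto simp: power2_eq_square algebra_simps)
  also have "\<dots> = (\<Sum>i\<le>n. (real i)^2 * real (n choose i)) - real n * (\<Sum>i\<le>n. real i * real (n choose i))
        + (real n)^2/4 * (\<Sum>i\<le>n. real (n choose i))"
    by (simp only: sum.distrib sum_subtractf sum_distrib_left)
  also have "\<dots> = real n * (real n + 1) * 2^n / 4 - real n * (real n * 2^n / 2) + (real n)^2/4 * 2^n"
    by (simp only: sum_sq sum_lin sum_row)
  also have "\<dots> = real n * 2^n / 4" by (simp add: power2_eq_square algebra_simps diff_divide_distrib add_divide_distrib)
  finally show ?thesis .
qed

lemma cheb: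
  assumes d: "d > 0"
  shows "(\<Sum>j\<in>{j. j \<le> n \<and> d \<le> \<bar>real j - real n/2\<bar>}. real (n choose j)) \<le> real n * 2^n / (4*d^2)"
proof -
  have "(\<Sum>j\<in>{j. j \<le> n \<and> d \<le> \<bar>real j - real n/2\<bar>}. real (n choose j))
      \<le> (\<Sum>j\<in>{j. j \<le> n \<and> d \<le> \<bar>real j - real n/2\<bar>}. real (n choose j) * (real j - real n/2)^2 / d^2)"
  proof (rule sum_mono)
    fix j assume "j \<in> {j. j \<le> n \<and> d \<le> \<bar>real j - real n/2\<bar>}"
    hence "d \<le> \<bar>real j - real n/2\<bar>" by simp
    hence "d^2 \<le> (real j - real n/2)^2" using d
      by (metis abs_ge_zero abs_of_pos power2_abs power_mono less_imp_le)
    hence "1 \<le> (real j - real n/2)^2 / d^2" using d by simp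
    thus "real (n choose j) \<le> real (n choose j) * (real j - real n/2)^2 / d^2"
      using mult_left_mono[of 1 "(real j - real n/2)^2 / d^2" "real (n choose j)"] by simp
  qed
  also have "\<dots> \<le> (\<Sum>j\<le>n. real (n choose j) * (real j - real n/2)^2 / d^2)"
    by (rule sum_mono2) auto
  also have "\<dots> = real n * 2^n / (4*d^2)"
    by (simp only: sum_divide_distrib[symmetric] sum_var)
  finally show ?thesis .
qed

lemma g_bound:
  fixes q :: real
  assumes q: "0<q" "q<1" and j: "j\<ge>1"
  shows "1/(1-q^j) \<le> 1 + 1/(real j*(1-q))"
proof -
  have e: "1-q^j = (1-q)*(\<Sum>i<j. q^i)" by (rule one_diff_power_eq)
  have "(\<Sum>i<j. q^j) \<le> (\<Sum>i<j. q^i)"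
    by (rule sum_mono) (use q in \<open>auto intro!: power_decreasing\<close>)
  hence s: "real j * q^j \<le> (\<Sum>i<j. q^i)" by simp
  have pj: "q^j > 0" using q by simp
  have lo: "(1-q) * (real j * q^j) \<le> 1 - q^j" unfolding e
    by (rule mult_left_mono[OF s]) (use q in simp)
  have lp: "(1-q) * (real j * q^j) > 0" using q j pj by simp
  have "1/(1-q^j) = 1 + q^j/(1-q^j)" using lo lp by (simp add: field_simps)
  also have "q^j/(1-q^j) \<le> q^j/((1-q) * (real j * q^j))"
    by (rule divide_left_mono[OF lo]) (use pj lp lo in \<open>auto intro!: mult_pos_pos\<close>)
  also have "q^j/((1-q) * (real j * q^j)) = 1/(real j*(1-q))"
  proof -
    have "real j*(1-q) > 0" using q j by simp
    thus ?thesis using pj q by (simp add: divide_simps)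
  qed
  finally show ?thesis by simp
qed

lemma binom_div:
  assumes j: "j\<ge>1"
  shows "real (l choose j) / real j \<le> 2*real (Suc l choose Suc j)/real (Suc l)"
proof -
  have "real (Suc j * (Suc l choose Suc j)) = real (Suc l * (l choose j))"
    by (simp only: Suc_times_binomial)
  hence e: "real (l choose j) = (real j + 1) * real (Suc l choose Suc j) / (real l + 1)"
    by (simp add: field_simps del: binomial_Suc_Suc)
  have "real (l choose j) / real j = ((real j + 1)/real j) * (real (Suc l choose Suc j) / (real l + 1))"
    unfolding e by (simp add: field_simps)
  also have "\<dots> \<le> 2 * (real (Suc l choose Suc j) / (real l + 1))"
    by (rule mult_right_mono) (use j in \<open>auto simp: field_simps\<close>)
  finally show ?thesis by (simp add: add.commute del: binomial_Suc_Suc)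
qed

lemma upper:
  fixes c D :: real and l :: nat
  assumes c: "c>0" and l: "2*c < real l" and D: "D > 1/2" and A: "real l/2 - D > 0"
  shows "(1/2^l) * (\<Sum>j=1..l. real(l choose j) * (1/(1-(1-2*c/real l)^j)))
     \<le> 1/(1-(1-2*c/real l) powr (real l/2 - D)) + real l/(4*D^2) + (1/c)*(2*(real l+1)/(4*(D-1/2)^2))"
proof -
  define q where "q = 1-2*c/real l"
  define A where "A = real l/2 - D"
  have lpos: "real l > 0" using c l by linarith
  have q0: "0<q" using c l lpos by (simp add: q_def field_simps)
  have q1: "q<1" using c lpos by (simp add: q_def)
  have omq: "1 - q = 2*c/real l" by (simp add: q_def)
  have qA: "q powr A < 1" using q0 q1 A by (simp add: A_def powr01_less_one)
  define gA where "gA = 1/(1 - q powr A)"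
  have gA0: "gA > 0" using qA by (simp add: gA_def)
  define P where "P = {j\<in>{1..l}. real j < A}"
  define Q where "Q = {j\<in>{1..l}. A \<le> real j}"
  have PQ: "{1..l} = P \<union> Q" "P \<inter> Q = {}" "finite P" "finite Q"
    by (auto simp: P_def Q_def)
  let ?g = "\<lambda>j. real(l choose j) * (1/(1-q^j))"
  have S: "(\<Sum>j=1..l. ?g j) = (\<Sum>j\<in>P. ?g j) + (\<Sum>j\<in>Q. ?g j)"
    unfolding PQ(1) by (rule sum.union_disjoint) (use PQ in auto)
  have sQ: "(\<Sum>j\<in>Q. ?g j) \<le> gA * 2^l"
  proof -
    have "(\<Sum>j\<in>Q. ?g j) \<le> (\<Sum>j\<in>Q. real (l choose j) * gA)"
    proof (rule sum_mono)
      fix j assume "j \<in> Q"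
      hence jA: "A \<le> real j" by (simp add: Q_def)
      have "q^j = q powr real j" using q0 by (simp add: powr_realpow)
      also have "\<dots> \<le> q powr A" by (rule powr_mono') (use jA q0 q1 in auto)
      finally have "1 - q powr A \<le> 1 - q^j" by simp
      hence "1/(1-q^j) \<le> gA" unfolding gA_def using qA
        by (intro divide_left_mono) (auto intro!: mult_pos_pos)
      thus "?g j \<le> real (l choose j) * gA" by (intro mult_left_mono) auto
    qed
    also have "\<dots> = gA * (\<Sum>j\<in>Q. real (l choose j))" by (simp add: sum_distrib_left mult.commute)
    also have "\<dots> \<le> gA * (\<Sum>j\<le>l. real (l choose j))"
      by (intro mult_left_mono sum_mono2) (use gA0 in \<open>auto simp: Q_def\<close>)
    also have "\<dots> = gA * 2^l" by (simp only: sum_row)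
    finally show ?thesis .
  qed
  have sP: "(\<Sum>j\<in>P. ?g j) \<le> (\<Sum>j\<in>P. real (l choose j) + (1/c) * real (Suc l choose Suc j))"
  proof (rule sum_mono)
    fix j assume "j \<in> P"
    hence j1: "j \<ge> 1" by (simp add: P_def)
    have "?g j \<le> real (l choose j) * (1 + 1/(real j*(1-q)))"
      by (intro mult_left_mono g_bound) (use q0 q1 j1 in auto)
    also have "\<dots> = real (l choose j) + (real (l choose j)/real j) * (real l/(2*c))"
      using c lpos by (simp add: omq field_simps)
    also have "\<dots> \<le> real (l choose j) + (2*real (Suc l choose Suc j)/real (Suc l)) * (real l/(2*c))"
      by (intro add_left_mono mult_right_mono binom_div j1) (use c in simp)
    also have "\<dots> \<le> real (l choose j) + (1/c) * real (Suc l choose Suc j)"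
    proof -
      have "(2*real (Suc l choose Suc j)/real (Suc l)) * (real l/(2*c))
          = (1/c) * real (Suc l choose Suc j) * (real l / real (Suc l))" using c lpos by (simp add: field_simps del: binomial_Suc_Suc)
      also have "\<dots> \<le> (1/c) * real (Suc l choose Suc j) * 1"
        by (intro mult_left_mono) (use c in auto)
      finally show ?thesis by simp
    qed
    finally show "?g j \<le> real (l choose j) + (1/c) * real (Suc l choose Suc j)" .
  qed
  have P1: "(\<Sum>j\<in>P. real (l choose j)) \<le> real l * 2^l / (4*D^2)"
  proof -
    have "(\<Sum>j\<in>P. real (l choose j)) \<le> (\<Sum>j\<in>{j. j \<le> l \<and> D \<le> \<bar>real j - real l/2\<bar>}. real (l choose j))"
      by (rule sum_mono2) (auto simp: P_def A_def)
    also have "\<dots> \<le> real l * 2^l / (4*D^2)" by (rule cheb) (use D in simp)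
    finally show ?thesis .
  qed
  have P2: "(\<Sum>j\<in>P. real (Suc l choose Suc j)) \<le> real (Suc l) * 2^(Suc l) / (4*(D-1/2)^2)"
  proof -
    have "(\<Sum>j\<in>P. real (Suc l choose Suc j)) = (\<Sum>i\<in>Suc ` P. real (Suc l choose i))"
      by (simp add: sum.reindex del: binomial_Suc_Suc)
    also have "\<dots> \<le> (\<Sum>i\<in>{i. i \<le> Suc l \<and> D-1/2 \<le> \<bar>real i - real (Suc l)/2\<bar>}. real (Suc l choose i))"
      by (rule sum_mono2) (auto simp: P_def A_def abs_if field_simps)
    also have "\<dots> \<le> real (Suc l) * 2^(Suc l) / (4*(D-1/2)^2)" by (rule cheb) (use D in simp)
    finally show ?thesis .
  qed
  have tot: "(\<Sum>j=1..l. ?g j) \<le> real l * 2^l / (4*D^2) + (1/c) * (real (Suc l) * 2^(Suc l) / (4*(D-1/2)^2)) + gA * 2^l"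
  proof -
    have "(\<Sum>j\<in>P. ?g j) \<le> (\<Sum>j\<in>P. real (l choose j)) + (1/c) * (\<Sum>j\<in>P. real (Suc l choose Suc j))"
      using sP by (simp only: sum.distrib sum_distrib_left)
    also have "\<dots> \<le> real l * 2^l / (4*D^2) + (1/c) * (real (Suc l) * 2^(Suc l) / (4*(D-1/2)^2))"
      by (intro add_mono P1 mult_left_mono P2) (use c in simp)
    finally show ?thesis using S sQ by linarith
  qed
  have "(1/2^l) * (\<Sum>j=1..l. ?g j) \<le> (1/2^l) * (real l * 2^l / (4*D^2) + (1/c) * (real (Suc l) * 2^(Suc l) / (4*(D-1/2)^2)) + gA * 2^l)"
    by (intro mult_left_mono tot) simp
  also have "\<dots> = gA + real l/(4*D^2) + (1/c)*(2*(real l+1)/(4*(D-1/2)^2))"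
    by (simp add: field_simps)
  finally show ?thesis by (simp add: q_def gA_def A_def)
qed

lemma lower:
  fixes c D :: real and l :: nat
  assumes c: "c>0" and l: "2*c < real l" and D: "D > 0"
  shows "(1/(1-(1-2*c/real l) powr (real l/2 + D))) * (1 - real l/(4*D^2) - 1/2^l)
     \<le> (1/2^l) * (\<Sum>j=1..l. real(l choose j) * (1/(1-(1-2*c/real l)^j)))"
proof -
  define q where "q = 1-2*c/real l"
  define B where "B = real l/2 + D"
  have lpos: "real l > 0" using c l by linarith
  have q0: "0<q" using c l lpos by (simp add: q_def field_simps)
  have q1: "q<1" using c lpos by (simp add: q_def)
  have qB: "q powr B < 1" using q0 q1 D lpos by (simp add: B_def powr01_less_one)
  define gB where "gB = 1/(1 - q powr B)"
  have gB0: "gB > 0" using qB by (simp add: gB_def)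
  define R where "R = {j\<in>{1..l}. real j \<le> B}"
  define T where "T = {j\<in>{..l}. B < real j}"
  let ?g = "\<lambda>j. real(l choose j) * (1/(1-q^j))"
  have gpos: "?g j \<ge> 0" if "j \<ge> 1" for j
  proof -
    have "q^j < 1" using q0 q1 that by (simp add: power_less_one_iff)
    thus ?thesis by simp
  qed
  have "(\<Sum>j\<in>R. ?g j) \<le> (\<Sum>j=1..l. ?g j)"
    using gpos by (intro sum_mono2) (auto simp: R_def)
  moreover have "(\<Sum>j\<in>R. real (l choose j) * gB) \<le> (\<Sum>j\<in>R. ?g j)"
  proof (rule sum_mono)
    fix j assume "j \<in> R"
    hence jB: "real j \<le> B" and j1: "j \<ge> 1" by (auto simp: R_def)
    have "q powr B \<le> q powr real j" by (rule powr_mono') (use jB q0 q1 in auto)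
    also have "\<dots> = q^j" using q0 by (simp add: powr_realpow)
    finally have le: "1 - q^j \<le> 1 - q powr B" by simp
    have "q^j < 1" using q0 q1 j1 by (simp add: power_less_one_iff)
    hence "gB \<le> 1/(1-q^j)" unfolding gB_def using le
      by (intro divide_left_mono) (auto intro!: mult_pos_pos)
    thus "real (l choose j) * gB \<le> ?g j" by (intro mult_left_mono) auto
  qed
  moreover have "(\<Sum>j\<in>R. real (l choose j) * gB) = gB * (\<Sum>j\<in>R. real (l choose j))"
    by (simp add: sum_distrib_left mult.commute)
  moreover have RC: "(\<Sum>j\<in>R. real (l choose j)) \<ge> 2^l - 1 - real l * 2^l / (4*D^2)"
  proof -
    have dec: "{..l} = insert 0 (R \<union> T)" "0 \<notin> R \<union> T" "R \<inter> T = {}"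
      using D lpos by (auto simp: R_def T_def B_def)
    have fin: "finite R" "finite T" by (auto simp: R_def T_def)
    have "(2::real)^l = (\<Sum>j\<le>l. real (l choose j))" by (simp only: sum_row)
    also have "\<dots> = 1 + (\<Sum>j\<in>R. real (l choose j)) + (\<Sum>j\<in>T. real (l choose j))"
      unfolding dec(1) using dec fin by (simp add: sum.union_disjoint)
    finally have e: "(2::real)^l = 1 + (\<Sum>j\<in>R. real (l choose j)) + (\<Sum>j\<in>T. real (l choose j))" .
    have "(\<Sum>j\<in>T. real (l choose j)) \<le> (\<Sum>j\<in>{j. j \<le> l \<and> D \<le> \<bar>real j - real l/2\<bar>}. real (l choose j))"
      by (rule sum_mono2) (auto simp: T_def B_def abs_if field_simps)
    also have "\<dots> \<le> real l * 2^l / (4*D^2)" by (rule cheb) (use D in simp)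
    finally show ?thesis using e by linarith
  qed
  ultimately have "gB * (2^l - 1 - real l * 2^l / (4*D^2)) \<le> (\<Sum>j=1..l. ?g j)"
    using gB0 by (smt (verit) mult_left_mono)
  hence "(1/2^l) * (gB * (2^l - 1 - real l * 2^l / (4*D^2))) \<le> (1/2^l) * (\<Sum>j=1..l. ?g j)"
    by (intro mult_left_mono) auto
  moreover have "(1/2^l) * (gB * (2^l - 1 - real l * 2^l / (4*D^2))) = gB * (1 - real l/(4*D^2) - 1/2^l)"
    by (simp add: field_simps)
  ultimately show ?thesis by (simp add: q_def gB_def B_def)
qed

theorem mainTheorem4:
  fixes c :: real
  assumes "c > 0"
  shows "(\<lambda>l::nat. (1 / 2 ^ l) * (\<Sum>j = 1..l. real (l choose j) *
            (1 / (1 - (1 - 2 * c / real l) ^ j))))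
         \<longlonglongrightarrow> 1 / (1 - exp (- c))"
proof -
  have c: "c > 0" by fact
  have ev1: "eventually (\<lambda>l::nat. 2*c < real l) sequentially"
    using filterlim_real_sequentially by (simp add: filterlim_at_top_dense)
  have ev2: "eventually (\<lambda>l::nat. real l powr (3/4) > 1/2) sequentially" by real_asymp
  have ev3: "eventually (\<lambda>l::nat. real l/2 - real l powr (3/4) > 0) sequentially" by real_asymp
  have up: "eventually (\<lambda>l::nat. (1 / 2 ^ l) * (\<Sum>j = 1..l. real (l choose j) *
            (1 / (1 - (1 - 2 * c / real l) ^ j))) \<le>
       1/(1-(1-2*c/real l) powr (real l/2 - real l powr (3/4))) + real l/(4*(real l powr (3/4))^2)
         + (1/c)*(2*(real l+1)/(4*(real l powr (3/4)-1/2)^2))) sequentially"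
    using ev1 ev2 ev3 by eventually_elim (rule upper[OF c], auto)
  have lo: "eventually (\<lambda>l::nat. (1/(1-(1-2*c/real l) powr (real l/2 + real l powr (3/4))))
        * (1 - real l/(4*(real l powr (3/4))^2) - 1/2^l) \<le> (1 / 2 ^ l) * (\<Sum>j = 1..l. real (l choose j) *
            (1 / (1 - (1 - 2 * c / real l) ^ j)))) sequentially"
    using ev1 ev2 by eventually_elim (rule lower[OF c], simp, linarith)
  have limU: "(\<lambda>l::nat. 1/(1-(1-2*c/real l) powr (real l/2 - real l powr (3/4))) + real l/(4*(real l powr (3/4))^2)
         + (1/c)*(2*(real l+1)/(4*(real l powr (3/4)-1/2)^2))) \<longlonglongrightarrow> inverse (1 - exp (-c))"
    using c by real_asymp
  have limL: "(\<lambda>l::nat. (1/(1-(1-2*c/real l) powr (real l/2 + real l powr (3/4))))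
        * (1 - real l/(4*(real l powr (3/4))^2) - 1/2^l)) \<longlonglongrightarrow> inverse (1 - exp (-c))"
    using c by real_asymp
  show ?thesis using tendsto_sandwich[OF lo up limL limU] by (simp add: inverse_eq_divide)
qed

end
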